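(* Let $p_{max}>0$ and consider barotropic equations of state $\rho:[0,p_{max}]\to[0,\infty)$ which are continuous and piecewise $\mathcal{C}^1$ on $[0,p_{max}]$, satisfy $\rho(p)>0$ for $p\in(0,p_{max}]$, for which $\Gamma(p)=\int_0^p \rho(p')^{-1}\,dp'$ exists (is finite) for $p\in[0,p_{max}]$, and for which $\lim_{p\to 0}\rho(p)^{-1}p$ exists. For $i\in\{-1,0,1\}$ let $\{I_i\le 0\}$, $\{I_i\equiv 0\}$, $\{I_i\ge 0\}$ denote the sets of such equations of state for which $I_i(p)\le 0$, $I_i(p)=0$, resp. $I_i(p)\ge 0$ for all $p\le p_{max}$ (wherever defined). Then $$\{I_1\le 0\}\subset\{I_0\le 0\}\subset\{I_{-1}\le 0\},\qquad \{I_1\equiv 0\}=\{I_0\equiv 0\}=\{I_{-1}\equiv 0\},\qquad \{I_1\ge 0\}\subset\{I_0\ge 0\}\subset\{I_{-1}\ge 0\}.$$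
   Context: For such an equation of state define $\Gamma(p)=\int_0^p \rho(p')^{-1}dp'$ and $I_{-1}(p)=7\int_0^p\Gamma(p')\,dp'-6\,\Gamma(p)\,p$, $I_0(p)=\Gamma(p)-6\rho(p)^{-1}p$ (with $I_0(0):=\lim_{p\to0}I_0(p)$), and $I_1(p)=6p\,\rho^{-2}\frac{d\rho}{dp}-5\rho^{-1}$ (defined where $\rho$ is differentiable). *)

theory Defs
  imports "HOL-Analysis.Analysis"
begin

definition EOS :: "real \<Rightarrow> (real \<Rightarrow> real) set" where
  "EOS pmax = {\<rho>.
     continuous_on {0..pmax} \<rho>
   \<and> (\<exists>S. finite S \<and> (\<forall>p\<in>{0<..<pmax} - S. \<rho> differentiable (at p))
          \<and> continuous_on ({0<..<pmax} - S) (deriv \<rho>))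
   \<and> (\<forall>p\<in>{0..pmax}. 0 \<le> \<rho> p)
   \<and> (\<forall>p\<in>{0<..pmax}. 0 < \<rho> p)
   \<and> (\<forall>p\<in>{0..pmax}. (\<lambda>q. inverse (\<rho> q)) integrable_on {0..p})
   \<and> (\<exists>L. ((\<lambda>q. inverse (\<rho> q) * q) \<longlongrightarrow> L) (at_right 0))}"

definition Gam :: "(real \<Rightarrow> real) \<Rightarrow> real \<Rightarrow> real" where
  "Gam \<rho> p = integral {0..p} (\<lambda>q. inverse (\<rho> q))"

definition Im1 :: "(real \<Rightarrow> real) \<Rightarrow> real \<Rightarrow> real" where
  "Im1 \<rho> p = 7 * integral {0..p} (Gam \<rho>) - 6 * Gam \<rho> p * p"

definition I0 :: "(real \<Rightarrow> real) \<Rightarrow> real \<Rightarrow> real" where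
  "I0 \<rho> p = (if p = 0 then Lim (at_right 0) (\<lambda>q. Gam \<rho> q - 6 * inverse (\<rho> q) * q)
              else Gam \<rho> p - 6 * inverse (\<rho> p) * p)"

definition I1 :: "(real \<Rightarrow> real) \<Rightarrow> real \<Rightarrow> real" where
  "I1 \<rho> p = 6 * p * inverse (\<rho> p ^ 2) * deriv \<rho> p - 5 * inverse (\<rho> p)"

text \<open>Points where I1 is defined: interior points where rho is differentiable.\<close>
definition dom1 :: "real \<Rightarrow> (real \<Rightarrow> real) \<Rightarrow> real set" where
  "dom1 pmax \<rho> = {p. 0 < p \<and> p < pmax \<and> \<rho> differentiable (at p)}"

end

theory Submission
  imports Defs
begin

lemma mono_fin:
  fixes f f' :: "real \<Rightarrow> real"
  assumes "finite S" "a \<le> b" "continuous_on {a..b} f"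
    and "\<And>x. x \<in> {a<..<b} - S \<Longrightarrow> (f has_real_derivative f' x) (at x)"
    and "\<And>x. x \<in> {a<..<b} - S \<Longrightarrow> f' x \<ge> 0"
  shows "f a \<le> f b"
proof -
  define g where "g x = (if x \<in> S \<union> {a,b} then 0 else f' x)" for x
  have "(g has_integral (f b - f a)) {a..b}"
  proof (rule fundamental_theorem_of_calculus_interior_strong[of "S \<union> {a,b}"])
    fix x assume x: "x \<in> {a<..<b} - (S \<union> {a,b})"
    then have "(f has_real_derivative f' x) (at x)" using assms(4) by auto
    then show "(f has_vector_derivative g x) (at x)"
      using x by (simp add: g_def has_real_derivative_iff_has_vector_derivative)
  qed (use assms in auto)
  moreover have "\<forall>x\<in>{a..b}. 0 \<le> g x" using assms(5) by (auto simp: g_def)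
  ultimately have "0 \<le> f b - f a" using has_integral_nonneg by blast
  thus ?thesis by simp
qed

context
  fixes pmax :: real and \<rho> :: "real \<Rightarrow> real"
  assumes pm: "pmax > 0" and E: "\<rho> \<in> EOS pmax"
begin

lemma cont: "continuous_on {0..pmax} \<rho>" using E by (simp add: EOS_def)
lemma pos: "p \<in> {0<..pmax} \<Longrightarrow> 0 < \<rho> p" using E by (simp add: EOS_def)
lemma nonneg: "p \<in> {0..pmax} \<Longrightarrow> 0 \<le> \<rho> p" using E by (simp add: EOS_def)
lemma integ: "p \<in> {0..pmax} \<Longrightarrow> (\<lambda>q. inverse (\<rho> q)) integrable_on {0..p}"
  using E by (simp add: EOS_def)
lemma Lex: "\<exists>L. ((\<lambda>q. inverse (\<rho> q) * q) \<longlongrightarrow> L) (at_right 0)"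
  using E by (simp add: EOS_def)
lemma Sex: "\<exists>S. finite S \<and> (\<forall>p\<in>{0<..<pmax} - S. \<rho> differentiable (at p))"
  using E unfolding EOS_def by blast

lemma G_cont: "continuous_on {0..pmax} (Gam \<rho>)"
  unfolding Gam_def[abs_def] using integ[of pmax] pm
  by (intro indefinite_integral_continuous_1) auto

lemma G0: "Gam \<rho> 0 = 0" by (simp add: Gam_def)

lemma invcont: assumes "0 < a" "b \<le> pmax" shows "continuous_on {a..b} (\<lambda>q. inverse (\<rho> q))"
proof (rule continuous_on_inverse)
  show "continuous_on {a..b} \<rho>" by (rule continuous_on_subset[OF cont]) (use assms in auto)
  show "\<forall>x\<in>{a..b}. \<rho> x \<noteq> 0"
  proof
    fix x assume "x \<in> {a..b}"
    then have "x \<in> {0<..pmax}" using assms by auto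
    then show "\<rho> x \<noteq> 0" using pos by force
  qed
qed

lemma G_deriv: "p \<in> {0<..<pmax} \<Longrightarrow> (Gam \<rho> has_real_derivative inverse (\<rho> p)) (at p)"
proof -
  assume p: "p \<in> {0<..<pmax}"
  have c: "continuous (at p within {0..pmax}) (\<lambda>q. inverse (\<rho> q))"
  proof -
    have "continuous (at p within {p/2..pmax}) (\<lambda>q. inverse (\<rho> q))"
      using invcont[of "p/2" pmax] p by (auto simp: continuous_on_eq_continuous_within)
    moreover have "at p within {p/2..pmax} = at p" "at p within {0..pmax} = at p"
      using p by (auto intro!: at_within_interior)
    ultimately show ?thesis by simp
  qed
  have "((\<lambda>u. integral {0..u} (\<lambda>q. inverse (\<rho> q))) has_vector_derivative inverse (\<rho> p))
      (at p within ({0..pmax} - {}))" (is ?h)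
    using p integ[of pmax] pm c by (intro integral_has_vector_derivative_continuous_at) auto
  then have "(Gam \<rho> has_vector_derivative inverse (\<rho> p)) (at p)"
  proof -
    have "at p within {0..pmax} = at p" using p by (auto intro!: at_within_interior)
    with \<open>?h\<close> show ?thesis unfolding Gam_def[abs_def] by simp
  qed
  thus ?thesis by (simp add: has_real_derivative_iff_has_vector_derivative)
qed


lemma L0: "((\<lambda>q. inverse (\<rho> q) * q) \<longlongrightarrow> 0) (at_right 0)"
proof -
  obtain L where L: "((\<lambda>q. inverse (\<rho> q) * q) \<longlongrightarrow> L) (at_right 0)" using Lex by blast
  have ev: "eventually (\<lambda>q. 0 < q \<and> q < pmax) (at_right (0::real))"
    using pm by (auto simp: eventually_at_right_field)
  have "0 \<le> L"
  proof (rule tendsto_lowerbound[OF L])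
    show "\<forall>\<^sub>F q in at_right 0. 0 \<le> inverse (\<rho> q) * q"
      using ev
    proof eventually_elim
      case (elim q)
      then have "0 < \<rho> q" using pos by auto
      then show ?case using elim by simp
    qed
  qed simp
  moreover have "\<not> 0 < L"
  proof
    assume L0: "0 < L"
    have "eventually (\<lambda>q. L/2 < inverse (\<rho> q) * q) (at_right 0)"
      using L L0 by (intro order_tendstoD) auto
    then obtain \<delta> where \<delta>: "\<delta> > 0" "\<And>q. 0 < q \<Longrightarrow> q < \<delta> \<Longrightarrow> L/2 < inverse (\<rho> q) * q"
      by (auto simp: eventually_at_right_field)
    define d where "d = min \<delta> pmax / 2"
    have d: "0 < d" "d < \<delta>" "d < pmax" using \<delta> pm by (auto simp: d_def)
    define C where "C = integral {0..d} (\<lambda>q. inverse (\<rho> q))"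
    have intd: "(\<lambda>q. inverse (\<rho> q)) integrable_on {0..d}" using integ[of d] d by auto
    have key: "L/2 * (ln d - ln e) \<le> C" if e: "0 < e" "e \<le> d" for e
    proof -
      have hi: "((\<lambda>q. L/2 * inverse q) has_integral (L/2 * ln d - L/2 * ln e)) {e..d}"
      proof (rule fundamental_theorem_of_calculus)
        show "e \<le> d" by fact
        fix x assume x: "x \<in> {e..d}"
        then have "x > 0" using e by auto
        then have "((\<lambda>x. L/2 * ln x) has_real_derivative L/2 * inverse x) (at x)"
          by (rule DERIV_cmult[OF DERIV_ln])
        then have "((\<lambda>x. L/2 * ln x) has_real_derivative L/2 * inverse x) (at x within {e..d})"
          by (rule has_field_derivative_at_within)
        then show "((\<lambda>x. L/2 * ln x) has_vector_derivative L/2 * inverse x) (at x within {e..d})"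
          by (simp only: has_real_derivative_iff_has_vector_derivative)
      qed
      have "integral {e..d} (\<lambda>q. L/2 * inverse q) = L/2 * ln d - L/2 * ln e"
        by (rule integral_unique[OF hi])
      then have "L/2 * (ln d - ln e) = integral {e..d} (\<lambda>q. L/2 * inverse q)"
        by (simp only: right_diff_distrib)
      also have "\<dots> \<le> integral {e..d} (\<lambda>q. inverse (\<rho> q))"
      proof (rule integral_le)
        show "(\<lambda>q. L/2 * inverse q) integrable_on {e..d}" using hi by blast
        show "(\<lambda>q. inverse (\<rho> q)) integrable_on {e..d}"
          by (rule integrable_on_subinterval[OF intd]) (use e in auto)
        fix x assume x: "x \<in> {e..d}"
        then have "0 < x" "x < \<delta>" using e d by auto
        then have "L/2 < inverse (\<rho> x) * x" by (rule \<delta>(2))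
        then have "L/2 * inverse x < inverse (\<rho> x) * x * inverse x"
          using \<open>0 < x\<close> by (intro mult_strict_right_mono) auto
        moreover have "inverse (\<rho> x) * x * inverse x = inverse (\<rho> x)" using \<open>0 < x\<close> by simp
        ultimately show "L/2 * inverse x \<le> inverse (\<rho> x)" by linarith
      qed
      also have "\<dots> \<le> C" unfolding C_def
      proof (rule integral_subset_le)
        show "{e..d} \<subseteq> {0..d}" using e by auto
        show "(\<lambda>q. inverse (\<rho> q)) integrable_on {e..d}"
          by (rule integrable_on_subinterval[OF intd]) (use e in auto)
        show "(\<lambda>q. inverse (\<rho> q)) integrable_on {0..d}" by (rule intd)
        show "\<forall>x\<in>{0..d}. 0 \<le> inverse (\<rho> x)"
        proof
          fix x assume "x \<in> {0..d}"
          then have "x \<in> {0..pmax}" using d by auto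
          then have "0 \<le> \<rho> x" by (rule nonneg)
          then show "0 \<le> inverse (\<rho> x)" by simp
        qed
      qed
      finally show ?thesis .
    qed
    have C0: "0 \<le> C" unfolding C_def
    proof (rule integral_nonneg[OF intd])
      fix x assume "x \<in> {0..d}"
      then have "x \<in> {0..pmax}" using d by auto
      then have "0 \<le> \<rho> x" by (rule nonneg)
      then show "0 \<le> inverse (\<rho> x)" by simp
    qed
    define t where "t = 2*C/L + 1"
    have "0 \<le> 2*C/L" using C0 L0 by simp
    then have t: "0 < t" by (simp add: t_def)
    define e where "e = exp (ln d - t)"
    have "exp (ln d - t) \<le> exp (ln d)" using t by simp
    then have e: "0 < e" "e \<le> d" using d by (simp_all add: e_def)
    have "ln e = ln d - t" by (simp add: e_def)
    then have "L/2 * t \<le> C" using key[OF e] by simp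
    moreover have "L/2 * t = C + L/2" using L0 by (simp add: t_def field_simps)
    ultimately show False using L0 by simp
  qed
  ultimately have "L = 0" by simp
  with L show ?thesis by simp
qed


lemma I0_pos: "p \<noteq> 0 \<Longrightarrow> I0 \<rho> p = Gam \<rho> p - 6 * inverse (\<rho> p) * p"
  by (simp add: I0_def)

lemma e_lim: "((\<lambda>q. Gam \<rho> q - 6 * inverse (\<rho> q) * q) \<longlongrightarrow> 0) (at_right 0)"
proof -
  have "continuous (at 0 within {0..pmax}) (Gam \<rho>)"
    using G_cont pm by (simp add: continuous_on_eq_continuous_within)
  then have "(Gam \<rho> \<longlongrightarrow> Gam \<rho> 0) (at 0 within {0..pmax})"
    by (simp add: continuous_within)
  then have g: "(Gam \<rho> \<longlongrightarrow> 0) (at_right 0)"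
    using at_within_Icc_at_right[OF pm] G0 by simp
  have "((\<lambda>q. 6 * (inverse (\<rho> q) * q)) \<longlongrightarrow> 6 * 0) (at_right 0)"
    by (rule tendsto_mult_left[OF L0])
  then have h: "((\<lambda>q. 6 * inverse (\<rho> q) * q) \<longlongrightarrow> 0) (at_right 0)"
    by (simp add: mult.assoc)
  have "((\<lambda>q. Gam \<rho> q - 6 * inverse (\<rho> q) * q) \<longlongrightarrow> 0 - 0) (at_right 0)"
    by (rule tendsto_diff[OF g h])
  then show ?thesis by simp
qed

lemma I0_0: "I0 \<rho> 0 = 0"
  unfolding I0_def using tendsto_Lim[OF trivial_limit_at_right_real e_lim] by simp

lemma I0_lim: "(I0 \<rho> \<longlongrightarrow> 0) (at_right 0)"
proof -
  have "eventually (\<lambda>q. Gam \<rho> q - 6 * inverse (\<rho> q) * q = I0 \<rho> q) (at_right (0::real))"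
    unfolding eventually_at_right_field by (rule exI[of _ 1]) (auto simp: I0_def)
  then show ?thesis by (rule Lim_transform_eventually[OF e_lim])
qed

lemma I0_cont: assumes "0 < a" "b \<le> pmax" shows "continuous_on {a..b} (I0 \<rho>)"
proof -
  have g: "continuous_on {a..b} (Gam \<rho>)" by (rule continuous_on_subset[OF G_cont]) (use assms in auto)
  have i: "continuous_on {a..b} (\<lambda>q. inverse (\<rho> q))" by (rule invcont[OF assms])
  have "continuous_on {a..b} (\<lambda>q. Gam \<rho> q - 6 * inverse (\<rho> q) * q)"
    by (intro continuous_on_diff continuous_on_mult g i continuous_on_const continuous_on_id)
  then show ?thesis
    by (rule continuous_on_eq) (use assms in \<open>auto simp: I0_def\<close>)
qed

lemma I0_deriv: assumes p: "p \<in> dom1 pmax \<rho>" shows "(I0 \<rho> has_real_derivative I1 \<rho> p) (at p)"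
proof -
  have p0: "0 < p" "p < pmax" and dif: "\<rho> differentiable (at p)" using p by (auto simp: dom1_def)
  have rp: "0 < \<rho> p" using pos p0 by auto
  have dr: "(\<rho> has_real_derivative deriv \<rho> p) (at p)"
    using dif by (simp add: DERIV_deriv_iff_real_differentiable)
  have di: "((\<lambda>q. inverse (\<rho> q)) has_real_derivative -(deriv \<rho> p * inverse (\<rho> p ^ Suc (Suc 0)))) (at p)"
    by (rule DERIV_inverse_fun[OF dr]) (use rp in simp)
  have d: "((\<lambda>q. Gam \<rho> q - 6 * inverse (\<rho> q) * q) has_real_derivative
     inverse (\<rho> p) - ((6 * -(deriv \<rho> p * inverse (\<rho> p ^ Suc (Suc 0)))) * p + 1 * (6 * inverse (\<rho> p)))) (at p)"
    by (rule DERIV_diff[OF G_deriv DERIV_mult[OF DERIV_cmult[OF di] DERIV_ident]]) (use p0 in auto)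
  have eq: "I1 \<rho> p = inverse (\<rho> p) - ((6 * -(deriv \<rho> p * inverse (\<rho> p ^ Suc (Suc 0)))) * p + 1 * (6 * inverse (\<rho> p)))"
    by (simp add: I1_def numeral_2_eq_2 algebra_simps)
  have "(I0 \<rho> has_real_derivative inverse (\<rho> p) - ((6 * -(deriv \<rho> p * inverse (\<rho> p ^ Suc (Suc 0)))) * p + 1 * (6 * inverse (\<rho> p)))) (at p)"
    by (rule has_field_derivative_transform_within_open[OF d, of "{0<..<pmax}"])
       (use p0 in \<open>auto simp: I0_def\<close>)
  then show ?thesis unfolding eq .
qed

lemma Im1_cont: "continuous_on {0..pmax} (Im1 \<rho>)"
proof -
  have "continuous_on {0..pmax} (\<lambda>x. integral {0..x} (Gam \<rho>))"
    by (rule indefinite_integral_continuous_1[OF integrable_continuous_real[OF G_cont]])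
  then show ?thesis unfolding Im1_def[abs_def]
    by (intro continuous_on_diff continuous_on_mult G_cont continuous_on_const continuous_on_id)
qed

lemma Im1_0: "Im1 \<rho> 0 = 0" by (simp add: Im1_def G0)

lemma Im1_deriv: assumes p: "p \<in> {0<..<pmax}" shows "(Im1 \<rho> has_real_derivative I0 \<rho> p) (at p)"
proof -
  have "((\<lambda>u. integral {0..u} (Gam \<rho>)) has_vector_derivative Gam \<rho> p) (at p within {0..pmax})"
    by (rule integral_has_vector_derivative[OF G_cont]) (use p in auto)
  moreover have "at p within {0..pmax} = at p" using p by (auto intro!: at_within_interior)
  ultimately have di: "((\<lambda>u. integral {0..u} (Gam \<rho>)) has_real_derivative Gam \<rho> p) (at p)"
    by (simp add: has_real_derivative_iff_has_vector_derivative)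
  have d: "(Im1 \<rho> has_real_derivative 7 * Gam \<rho> p - ((6 * inverse (\<rho> p)) * p + 1 * (6 * Gam \<rho> p))) (at p)"
    unfolding Im1_def[abs_def]
    by (rule DERIV_diff[OF DERIV_cmult[OF di] DERIV_mult[OF DERIV_cmult[OF G_deriv[OF p]] DERIV_ident]])
  have "I0 \<rho> p = 7 * Gam \<rho> p - ((6 * inverse (\<rho> p)) * p + 1 * (6 * Gam \<rho> p))"
    using p by (simp add: I0_def algebra_simps)
  then show ?thesis using d by simp
qed

lemma K0: assumes s: "\<forall>x\<in>dom1 pmax \<rho>. 0 \<le> s * I1 \<rho> x" and p: "p \<in> {0..pmax}"
  shows "0 \<le> s * I0 \<rho> p"
proof (cases "p = 0")
  case True then show ?thesis by (simp add: I0_0)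
next
  case False
  then have p0: "0 < p" "p \<le> pmax" using p by auto
  obtain S where S: "finite S" "\<forall>x\<in>{0<..<pmax} - S. \<rho> differentiable (at x)" using Sex by blast
  have mono: "s * I0 \<rho> a \<le> s * I0 \<rho> p" if a: "0 < a" "a < p" for a
  proof (rule mono_fin[of S a p "\<lambda>x. s * I0 \<rho> x" "\<lambda>x. s * I1 \<rho> x"])
    show "finite S" by fact
    show "a \<le> p" using a by simp
    show "continuous_on {a..p} (\<lambda>x. s * I0 \<rho> x)"
      by (intro continuous_on_mult continuous_on_const I0_cont) (use a p0 in auto)
    fix x assume x: "x \<in> {a<..<p} - S"
    then have "x \<in> dom1 pmax \<rho>" using S a p0 by (auto simp: dom1_def)
    then show "((\<lambda>x. s * I0 \<rho> x) has_real_derivative s * I1 \<rho> x) (at x)"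
      and "0 \<le> s * I1 \<rho> x" using s by (auto intro: DERIV_cmult[OF I0_deriv])
  qed
  have "((\<lambda>a. s * I0 \<rho> a) \<longlongrightarrow> s * 0) (at_right 0)" by (rule tendsto_mult_left[OF I0_lim])
  then have t: "((\<lambda>a. s * I0 \<rho> a) \<longlongrightarrow> 0) (at_right 0)" by simp
  have "eventually (\<lambda>a. s * I0 \<rho> a \<le> s * I0 \<rho> p) (at_right 0)"
    unfolding eventually_at_right_field using p0 mono by blast
  then show ?thesis using tendsto_upperbound[OF t] by simp
qed

lemma K1: assumes s: "\<forall>x\<in>{0..pmax}. 0 \<le> s * I0 \<rho> x" and p: "p \<in> {0..pmax}"
  shows "0 \<le> s * Im1 \<rho> p"
proof -
  have "s * Im1 \<rho> 0 \<le> s * Im1 \<rho> p"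
  proof (rule mono_fin[of "{}" 0 p "\<lambda>x. s * Im1 \<rho> x" "\<lambda>x. s * I0 \<rho> x"])
    show "0 \<le> p" using p by simp
    show "continuous_on {0..p} (\<lambda>x. s * Im1 \<rho> x)"
      by (intro continuous_on_mult continuous_on_const continuous_on_subset[OF Im1_cont]) (use p in auto)
    fix x assume x: "x \<in> {0<..<p} - {}"
    then have "x \<in> {0<..<pmax}" using p by auto
    then show "((\<lambda>x. s * Im1 \<rho> x) has_real_derivative s * I0 \<rho> x) (at x)"
      by (rule DERIV_cmult[OF Im1_deriv])
    show "0 \<le> s * I0 \<rho> x" using s x p by auto
  qed simp
  then show ?thesis by (simp add: Im1_0)
qed

lemma Eq1: assumes z: "\<forall>x\<in>{0..pmax}. I0 \<rho> x = 0" and x: "x \<in> dom1 pmax \<rho>"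
  shows "I1 \<rho> x = 0"
proof -
  have x0: "x \<in> {0<..<pmax}" using x by (auto simp: dom1_def)
  have "(I0 \<rho> has_real_derivative 0) (at x)"
    by (rule has_field_derivative_transform_within_open[OF DERIV_const, of "{0<..<pmax}"])
       (use x0 z in auto)
  then show ?thesis using DERIV_unique[OF I0_deriv[OF x]] by blast
qed

lemma Eq2: assumes z: "\<forall>x\<in>{0..pmax}. Im1 \<rho> x = 0" and p: "p \<in> {0..pmax}"
  shows "I0 \<rho> p = 0"
proof -
  have inner: "I0 \<rho> x = 0" if x0: "x \<in> {0<..<pmax}" for x
  proof -
    have "(Im1 \<rho> has_real_derivative 0) (at x)"
      by (rule has_field_derivative_transform_within_open[OF DERIV_const, of "{0<..<pmax}"])
         (use x0 z in auto)
    then show ?thesis using DERIV_unique[OF Im1_deriv[OF x0]] by blast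
  qed
  consider "p = 0" | "p \<in> {0<..<pmax}" | "p = pmax" using p by fastforce
  then show ?thesis
  proof cases
    case 1 then show ?thesis by (simp add: I0_0)
  next
    case 2 then show ?thesis by (rule inner)
  next
    case 3
    have "continuous_on {pmax/2..pmax} (I0 \<rho>)" by (rule I0_cont) (use pm in auto)
    then have "continuous (at pmax within {pmax/2..pmax}) (I0 \<rho>)"
      using pm by (simp add: continuous_on_eq_continuous_within)
    then have "(I0 \<rho> \<longlongrightarrow> I0 \<rho> pmax) (at pmax within {pmax/2..pmax})"
      by (simp add: continuous_within)
    moreover have "at pmax within {pmax/2..pmax} = at_left pmax"
      by (rule at_within_Icc_at_left) (use pm in simp)
    ultimately have t1: "(I0 \<rho> \<longlongrightarrow> I0 \<rho> pmax) (at_left pmax)" by simp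
    have "eventually (\<lambda>q. 0 = I0 \<rho> q) (at_left pmax)"
      unfolding eventually_at_left_field using pm inner by (intro exI[of _ 0]) auto
    then have t2: "(I0 \<rho> \<longlongrightarrow> 0) (at_left pmax)"
      by (rule Lim_transform_eventually[OF tendsto_const])
    have "I0 \<rho> pmax = 0" by (rule tendsto_unique[OF trivial_limit_at_left_real t1 t2])
    then show ?thesis using 3 by simp
  qed
qed

end

theorem proposition1:
  fixes pmax :: real
  assumes "pmax > 0"
  shows
   "{\<rho>\<in>EOS pmax. \<forall>p\<in>dom1 pmax \<rho>. I1 \<rho> p \<le> 0} \<subseteq> {\<rho>\<in>EOS pmax. \<forall>p\<in>{0..pmax}. I0 \<rho> p \<le> 0}
  \<and> {\<rho>\<in>EOS pmax. \<forall>p\<in>{0..pmax}. I0 \<rho> p \<le> 0} \<subseteq> {\<rho>\<in>EOS pmax. \<forall>p\<in>{0..pmax}. Im1 \<rho> p \<le> 0}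
  \<and> {\<rho>\<in>EOS pmax. \<forall>p\<in>dom1 pmax \<rho>. I1 \<rho> p = 0} = {\<rho>\<in>EOS pmax. \<forall>p\<in>{0..pmax}. I0 \<rho> p = 0}
  \<and> {\<rho>\<in>EOS pmax. \<forall>p\<in>{0..pmax}. I0 \<rho> p = 0} = {\<rho>\<in>EOS pmax. \<forall>p\<in>{0..pmax}. Im1 \<rho> p = 0}
  \<and> {\<rho>\<in>EOS pmax. \<forall>p\<in>dom1 pmax \<rho>. I1 \<rho> p \<ge> 0} \<subseteq> {\<rho>\<in>EOS pmax. \<forall>p\<in>{0..pmax}. I0 \<rho> p \<ge> 0}
  \<and> {\<rho>\<in>EOS pmax. \<forall>p\<in>{0..pmax}. I0 \<rho> p \<ge> 0} \<subseteq> {\<rho>\<in>EOS pmax. \<forall>p\<in>{0..pmax}. Im1 \<rho> p \<ge> 0}"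
proof -
  have F1: "\<forall>p\<in>{0..pmax}. I0 \<rho> p \<le> 0" if "\<rho> \<in> EOS pmax" "\<forall>p\<in>dom1 pmax \<rho>. I1 \<rho> p \<le> 0" for \<rho>
  proof
    fix p assume p: "p \<in> {0..pmax}"
    have "\<forall>x\<in>dom1 pmax \<rho>. 0 \<le> (-1) * I1 \<rho> x" using that(2) by simp
    then have "0 \<le> (-1) * I0 \<rho> p" by (rule K0[OF assms that(1) _ p])
    then show "I0 \<rho> p \<le> 0" by simp
  qed
  have F2: "\<forall>p\<in>{0..pmax}. I0 \<rho> p \<ge> 0" if "\<rho> \<in> EOS pmax" "\<forall>p\<in>dom1 pmax \<rho>. I1 \<rho> p \<ge> 0" for \<rho>
  proof
    fix p assume p: "p \<in> {0..pmax}"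
    have "\<forall>x\<in>dom1 pmax \<rho>. 0 \<le> 1 * I1 \<rho> x" using that(2) by simp
    then have "0 \<le> 1 * I0 \<rho> p" by (rule K0[OF assms that(1) _ p])
    then show "I0 \<rho> p \<ge> 0" by simp
  qed
  have F3: "\<forall>p\<in>{0..pmax}. Im1 \<rho> p \<le> 0" if "\<rho> \<in> EOS pmax" "\<forall>p\<in>{0..pmax}. I0 \<rho> p \<le> 0" for \<rho>
  proof
    fix p assume p: "p \<in> {0..pmax}"
    have "\<forall>x\<in>{0..pmax}. 0 \<le> (-1) * I0 \<rho> x" using that(2) by simp
    then have "0 \<le> (-1) * Im1 \<rho> p" by (rule K1[OF assms that(1) _ p])
    then show "Im1 \<rho> p \<le> 0" by simp
  qed
  have F4: "\<forall>p\<in>{0..pmax}. Im1 \<rho> p \<ge> 0" if "\<rho> \<in> EOS pmax" "\<forall>p\<in>{0..pmax}. I0 \<rho> p \<ge> 0" for \<rho>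
  proof
    fix p assume p: "p \<in> {0..pmax}"
    have "\<forall>x\<in>{0..pmax}. 0 \<le> 1 * I0 \<rho> x" using that(2) by simp
    then have "0 \<le> 1 * Im1 \<rho> p" by (rule K1[OF assms that(1) _ p])
    then show "Im1 \<rho> p \<ge> 0" by simp
  qed
  have F5: "\<forall>p\<in>{0..pmax}. I0 \<rho> p = 0" if "\<rho> \<in> EOS pmax" "\<forall>p\<in>dom1 pmax \<rho>. I1 \<rho> p = 0" for \<rho>
  proof -
    have a: "\<forall>p\<in>{0..pmax}. I0 \<rho> p \<le> 0" using F1[OF that(1)] that(2) by simp
    have b: "\<forall>p\<in>{0..pmax}. I0 \<rho> p \<ge> 0" using F2[OF that(1)] that(2) by simp
    show ?thesis using a b by force
  qed
  have F6: "\<forall>p\<in>{0..pmax}. Im1 \<rho> p = 0" if "\<rho> \<in> EOS pmax" "\<forall>p\<in>{0..pmax}. I0 \<rho> p = 0" for \<rho>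
  proof -
    have a: "\<forall>p\<in>{0..pmax}. Im1 \<rho> p \<le> 0" using F3[OF that(1)] that(2) by simp
    have b: "\<forall>p\<in>{0..pmax}. Im1 \<rho> p \<ge> 0" using F4[OF that(1)] that(2) by simp
    show ?thesis using a b by force
  qed
  have F7: "\<forall>p\<in>dom1 pmax \<rho>. I1 \<rho> p = 0" if "\<rho> \<in> EOS pmax" "\<forall>p\<in>{0..pmax}. I0 \<rho> p = 0" for \<rho>
    using Eq1[OF assms that(1) that(2)] by blast
  have F8: "\<forall>p\<in>{0..pmax}. I0 \<rho> p = 0" if "\<rho> \<in> EOS pmax" "\<forall>p\<in>{0..pmax}. Im1 \<rho> p = 0" for \<rho>
    using Eq2[OF assms that(1) that(2)] by blast
  show ?thesis
  proof (intro conjI)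
    show "{\<rho>\<in>EOS pmax. \<forall>p\<in>dom1 pmax \<rho>. I1 \<rho> p \<le> 0} \<subseteq> {\<rho>\<in>EOS pmax. \<forall>p\<in>{0..pmax}. I0 \<rho> p \<le> 0}"
      using F1 by blast
    show "{\<rho>\<in>EOS pmax. \<forall>p\<in>{0..pmax}. I0 \<rho> p \<le> 0} \<subseteq> {\<rho>\<in>EOS pmax. \<forall>p\<in>{0..pmax}. Im1 \<rho> p \<le> 0}"
      using F3 by blast
    show "{\<rho>\<in>EOS pmax. \<forall>p\<in>dom1 pmax \<rho>. I1 \<rho> p = 0} = {\<rho>\<in>EOS pmax. \<forall>p\<in>{0..pmax}. I0 \<rho> p = 0}"
      using F5 F7 by blast
    show "{\<rho>\<in>EOS pmax. \<forall>p\<in>{0..pmax}. I0 \<rho> p = 0} = {\<rho>\<in>EOS pmax. \<forall>p\<in>{0..pmax}. Im1 \<rho> p = 0}"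
      using F6 F8 by blast
    show "{\<rho>\<in>EOS pmax. \<forall>p\<in>dom1 pmax \<rho>. I1 \<rho> p \<ge> 0} \<subseteq> {\<rho>\<in>EOS pmax. \<forall>p\<in>{0..pmax}. I0 \<rho> p \<ge> 0}"
      using F2 by blast
    show "{\<rho>\<in>EOS pmax. \<forall>p\<in>{0..pmax}. I0 \<rho> p \<ge> 0} \<subseteq> {\<rho>\<in>EOS pmax. \<forall>p\<in>{0..pmax}. Im1 \<rho> p \<ge> 0}"
      using F4 by blast
  qed
qed

end
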